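(* Let $G$ be a finite group. Then there exist a finite group $\widetilde G$ and a surjective group homomorphism $\varphi \colon \widetilde G \to G$ such that for any two subgroups $G_1, G_2 \le G$ that are not conjugate in $G$, the pre-images $\varphi^{-1}(G_1)$ and $\varphi^{-1}(G_2)$ are not isomorphic (as abstract groups). *)

theory Defs
  imports "HOL-Algebra.Algebra"
begin

definition conjugate_in :: "('a, 'b) monoid_scheme \<Rightarrow> 'a set \<Rightarrow> 'a set \<Rightarrow> bool" where
  "conjugate_in G H1 H2 \<longleftrightarrow>
     (\<exists>g \<in> carrier G. H2 = (\<lambda>h. g \<otimes>\<^bsub>G\<^esub> h \<otimes>\<^bsub>G\<^esub> inv\<^bsub>G\<^esub> g) ` H1)"

definition preimage_in :: "('c, 'd) monoid_scheme \<Rightarrow> ('c \<Rightarrow> 'a) \<Rightarrow> 'a set \<Rightarrow> 'c set" where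
  "preimage_in Gt \<phi> H = {x \<in> carrier Gt. \<phi> x \<in> H}"

end

theory Submission
  imports Defs
begin


lemma modh: "((a::int) + d * (b mod m)) mod m = (a + d * b) mod m"
  by (metis mod_add_right_eq mod_mult_right_eq)

lemma modh2: "((a::int) mod m + b) mod m = (a + b) mod m"
  by (metis mod_add_left_eq)

lemma preimage_subgroup:
  assumes A: "group A" and B: "group B" and h: "h \<in> hom A B" and H: "subgroup H B"
  shows "subgroup {x\<in>carrier A. h x \<in> H} A"
proof -
  interpret gh: group_hom A B h using A B h by (simp add: group_hom_def group_hom_axioms_def)
  show ?thesis
  proof (rule group.subgroupI[OF A])
    show "{x \<in> carrier A. h x \<in> H} \<noteq> {}" using subgroup.one_closed[OF H] by auto
    fix a assume "a \<in> {x \<in> carrier A. h x \<in> H}"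
    then show "inv\<^bsub>A\<^esub> a \<in> {x \<in> carrier A. h x \<in> H}"
      using subgroup.m_inv_closed[OF H] by auto
  next
    fix a b assume "a \<in> {x \<in> carrier A. h x \<in> H}" "b \<in> {x \<in> carrier A. h x \<in> H}"
    then show "a \<otimes>\<^bsub>A\<^esub> b \<in> {x \<in> carrier A. h x \<in> H}"
      using subgroup.m_closed[OF H] by auto
  qed auto
qed

definition NS :: "nat \<Rightarrow> ('c,'d) monoid_scheme \<Rightarrow> 'c set set" where
  "NS q P = {L. subgroup L P \<and> card L = q \<and>
     (\<forall>x\<in>carrier P. \<forall>l\<in>L. \<exists>l'\<in>L. x \<otimes>\<^bsub>P\<^esub> l = l' \<otimes>\<^bsub>P\<^esub> x)}"

locale wr = group G for G :: "('a,'b) monoid_scheme" (structure) +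
  fixes Om :: "'x set" and act :: "'a \<Rightarrow> 'x \<Rightarrow> 'x" and q :: nat
  assumes finX: "finite Om"
    and act_X: "g \<in> carrier G \<Longrightarrow> z \<in> Om \<Longrightarrow> act g z \<in> Om"
    and act_out: "g \<in> carrier G \<Longrightarrow> z \<notin> Om \<Longrightarrow> act g z = z"
    and act_one: "act \<one> z = z"
    and act_mult: "g \<in> carrier G \<Longrightarrow> h \<in> carrier G \<Longrightarrow> act (g \<otimes> h) z = act g (act h z)"
    and q_prime: "Factorial_Ring.prime q" and q_big: "card (carrier G) + 2 < q" and finG: "finite (carrier G)"
begin

definition FD :: "(('x \<Rightarrow> int) \<times> ('x \<Rightarrow> int)) set" where
  "FD = {(f,d). (\<forall>z. z \<notin> Om \<longrightarrow> f z = 0 \<and> d z = 1) \<and>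
                (\<forall>z\<in>Om. 0 \<le> f z \<and> f z < int q \<and> (d z = 1 \<or> d z = -1))}"

definition W :: "(('x \<Rightarrow> int) \<times> ('x \<Rightarrow> int) \<times> 'a) monoid" where
  "W = \<lparr>carrier = {(f,d,g). (f,d) \<in> FD \<and> g \<in> carrier G},
        monoid.mult = (\<lambda>x y. (\<lambda>z. (fst x z + fst (snd x) z * fst y (act (inv (snd (snd x))) z)) mod int q,
                                        \<lambda>z. fst (snd x) z * fst (snd y) (act (inv (snd (snd x))) z), snd (snd x) \<otimes> snd (snd y))),
        one = (\<lambda>_. 0, \<lambda>_. 1, \<one>)\<rparr>"

lemma W_carrier: "(f,d,g) \<in> carrier W \<longleftrightarrow> (f,d) \<in> FD \<and> g \<in> carrier G"
  by (simp add: W_def)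

lemma W_mult: "(f,d,g) \<otimes>\<^bsub>W\<^esub> (f',d',g') = (\<lambda>z. (f z + d z * f' (act (inv g) z)) mod int q,
                                        \<lambda>z. d z * d' (act (inv g) z), g \<otimes> g')"
  by (simp add: W_def)

lemma W_one: "\<one>\<^bsub>W\<^esub> = (\<lambda>_. 0, \<lambda>_. 1, \<one>)"
  by (simp add: W_def)

lemma q_pos: "0 < int q" using q_big by simp

lemma FD_f: "(f,d) \<in> FD \<Longrightarrow> 0 \<le> f z \<and> f z < int q"
  using q_pos unfolding FD_def by (cases "z \<in> Om") auto

lemma FD_d: "(f,d) \<in> FD \<Longrightarrow> d z = 1 \<or> d z = -1"
  unfolding FD_def by (cases "z \<in> Om") auto

lemma FD_dd: "(f,d) \<in> FD \<Longrightarrow> d z * d z = 1"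
  using FD_d[of f d z] by auto

lemma act_in_iff: "g \<in> carrier G \<Longrightarrow> act g z \<in> Om \<longleftrightarrow> z \<in> Om"
  using act_X act_out by metis

lemma act_cancel1: "g \<in> carrier G \<Longrightarrow> act g (act (inv g) z) = z"
  by (metis act_mult act_one inv_closed r_inv)

lemma act_cancel2: "g \<in> carrier G \<Longrightarrow> act (inv g) (act g z) = z"
  by (metis act_mult act_one inv_closed l_inv)

lemma W_group: "group W"
proof (rule groupI)
  fix x y assume x: "x \<in> carrier W" and y: "y \<in> carrier W"
  obtain f d g where xe: "x = (f,d,g)" by (cases x) auto
  obtain f' d' g' where ye: "y = (f',d',g')" by (cases y) auto
  have fd: "(f,d) \<in> FD" "g \<in> carrier G" "(f',d') \<in> FD" "g' \<in> carrier G"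
    using x y xe ye W_carrier by auto
  show "x \<otimes>\<^bsub>W\<^esub> y \<in> carrier W"
    unfolding xe ye W_mult W_carrier
  proof (intro conjI)
    show "g \<otimes> g' \<in> carrier G" using fd by simp
    show "(\<lambda>z. (f z + d z * f' (act (inv g) z)) mod int q, \<lambda>z. d z * d' (act (inv g) z)) \<in> FD"
      unfolding FD_def
    proof (clarsimp, intro conjI allI impI ballI)
      fix z assume z: "z \<notin> Om"
      have "act (inv g) z = z" using z fd act_out by simp
      then show "(f z + d z * f' (act (inv g) z)) mod int q = 0" "d z * d' (act (inv g) z) = 1"
        using fd z unfolding FD_def by auto
    next
      fix z assume z: "z \<in> Om"
      show "0 \<le> (f z + d z * f' (act (inv g) z)) mod int q" using q_pos by simp
      show "(f z + d z * f' (act (inv g) z)) mod int q < int q" using q_pos by simp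
      show "d z * d' (act (inv g) z) = 1 \<or> d z * d' (act (inv g) z) = - 1"
        using FD_d[OF fd(1), of z] FD_d[OF fd(3), of "act (inv g) z"] by auto
    qed
  qed
next
  show "\<one>\<^bsub>W\<^esub> \<in> carrier W" unfolding W_one W_carrier FD_def using q_pos by auto
next
  fix x y z assume x: "x \<in> carrier W" and y: "y \<in> carrier W" and zz: "z \<in> carrier W"
  obtain f d g where xe: "x = (f,d,g)" by (cases x) auto
  obtain f' d' g' where ye: "y = (f',d',g')" by (cases y) auto
  obtain f'' d'' g'' where ze: "z = (f'',d'',g'')" by (cases z) auto
  have fd: "g \<in> carrier G" "g' \<in> carrier G" "g'' \<in> carrier G"
    using x y zz xe ye ze W_carrier by auto
  have a: "act (inv (g \<otimes> g')) w = act (inv g') (act (inv g) w)" for w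
    using fd by (simp add: inv_mult_group act_mult)
  show "x \<otimes>\<^bsub>W\<^esub> y \<otimes>\<^bsub>W\<^esub> z = x \<otimes>\<^bsub>W\<^esub> (y \<otimes>\<^bsub>W\<^esub> z)"
    unfolding xe ye ze W_mult a
    using fd by (simp add: m_assoc modh modh2 algebra_simps)
next
  fix x assume x: "x \<in> carrier W"
  obtain f d g where xe: "x = (f,d,g)" by (cases x) auto
  have fd: "(f,d) \<in> FD" "g \<in> carrier G" using x xe W_carrier by auto
  show "\<one>\<^bsub>W\<^esub> \<otimes>\<^bsub>W\<^esub> x = x"
    unfolding xe W_one W_mult using fd FD_f[OF fd(1)] by (auto simp: act_one)
  let ?y = "(\<lambda>z. (- d (act g z) * f (act g z)) mod int q, \<lambda>z. d (act g z), inv g)"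
  have "?y \<in> carrier W"
    using fd q_pos FD_d[OF fd(1)] unfolding W_carrier FD_def
    by (auto simp: act_out act_X)
  moreover have "?y \<otimes>\<^bsub>W\<^esub> x = \<one>\<^bsub>W\<^esub>"
    unfolding xe W_one W_mult using fd FD_dd[OF fd(1)]
    by (auto simp: mod_simps algebra_simps)
  ultimately show "\<exists>y\<in>carrier W. y \<otimes>\<^bsub>W\<^esub> x = \<one>\<^bsub>W\<^esub>" by blast
qed


definition psi :: "('x \<Rightarrow> int) \<times> ('x \<Rightarrow> int) \<times> 'a \<Rightarrow> 'a" where
  "psi w = snd (snd w)"

lemma psi_hom: "psi \<in> hom W G"
  unfolding hom_def psi_def
proof (intro CollectI conjI ballI)
  show "(\<lambda>w. snd (snd w)) \<in> carrier W \<rightarrow> carrier G" using W_carrier by auto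
  fix x y assume "x \<in> carrier W" "y \<in> carrier W"
  then show "snd (snd (x \<otimes>\<^bsub>W\<^esub> y)) = snd (snd x) \<otimes> snd (snd y)"
    by (cases x; cases y) (simp add: W_mult)
qed

lemma psi_surj: "psi ` carrier W = carrier G"
proof
  show "psi ` carrier W \<subseteq> carrier G" using W_carrier psi_def by auto
  show "carrier G \<subseteq> psi ` carrier W"
  proof
    fix g assume g: "g \<in> carrier G"
    have "(\<lambda>_. 0, \<lambda>_. 1, g) \<in> carrier W" using g q_pos unfolding W_carrier FD_def by auto
    then show "g \<in> psi ` carrier W" unfolding psi_def by force
  qed
qed

lemma W_finite: "finite (carrier W)"
proof -
  let ?F1 = "{f. \<forall>z. (z \<in> Om \<longrightarrow> f z \<in> {0..<int q}) \<and> (z \<notin> Om \<longrightarrow> f z = 0)}"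
  let ?F2 = "{d. \<forall>z. (z \<in> Om \<longrightarrow> d z \<in> {1,-1::int}) \<and> (z \<notin> Om \<longrightarrow> d z = 1)}"
  have "finite ?F1" by (rule finite_set_of_finite_funs) (auto simp: finX)
  moreover have "finite ?F2" by (rule finite_set_of_finite_funs) (auto simp: finX)
  ultimately have "finite (?F1 \<times> ?F2 \<times> carrier G)" using finG by simp
  moreover have "carrier W \<subseteq> ?F1 \<times> ?F2 \<times> carrier G"
    unfolding W_def FD_def by auto
  ultimately show ?thesis by (rule finite_subset[rotated])
qed

definition PC :: "'a set \<Rightarrow> (('x \<Rightarrow> int) \<times> ('x \<Rightarrow> int) \<times> 'a) set" where
  "PC H = {w \<in> carrier W. psi w \<in> H}"

definition Fix :: "'a set \<Rightarrow> 'x set" where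
  "Fix H = {z \<in> Om. \<forall>h\<in>H. act h z = z}"

definition pt :: "'x \<Rightarrow> int \<Rightarrow> ('x \<Rightarrow> int) \<times> ('x \<Rightarrow> int) \<times> 'a" where
  "pt x a = (\<lambda>z. if z = x then a else 0, \<lambda>_. 1, \<one>)"

definition Lx :: "'x \<Rightarrow> (('x \<Rightarrow> int) \<times> ('x \<Rightarrow> int) \<times> 'a) set" where
  "Lx x = pt x ` {0..<int q}"

lemma PC_sub: "subgroup H G \<Longrightarrow> subgroup (PC H) W"
  unfolding PC_def by (rule preimage_subgroup[OF W_group is_group psi_hom])

lemma PW_group: "subgroup H G \<Longrightarrow> group (W\<lparr>carrier := PC H\<rparr>)"
  using PC_sub group.subgroup_imp_group[OF W_group] by blast

lemma act_inv_one: "act (inv \<one>) z = z" by (simp add: act_one)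

lemma pt_carrier: "x \<in> Om \<Longrightarrow> 0 \<le> a \<Longrightarrow> a < int q \<Longrightarrow> pt x a \<in> carrier W"
  unfolding pt_def W_carrier FD_def by auto

lemma pt_mult: "pt x a \<otimes>\<^bsub>W\<^esub> pt x b = pt x ((a + b) mod int q)"
  unfolding pt_def W_mult act_inv_one by (auto simp: fun_eq_iff)

lemma pt_zero: "pt x 0 = \<one>\<^bsub>W\<^esub>"
  unfolding pt_def W_one by (auto simp: fun_eq_iff)

lemma pt_inj: "pt x a = pt y b \<Longrightarrow> a \<noteq> 0 \<Longrightarrow> x = y \<and> a = b"
  unfolding pt_def by (auto simp: fun_eq_iff split: if_splits)

lemma card_Lx: "card (Lx x) = q"
proof -
  have "inj_on (pt x) {0..<int q}" by (auto simp: inj_on_def pt_def fun_eq_iff)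
  then show ?thesis unfolding Lx_def by (simp add: card_image)
qed

lemma Lx_in_NS:
  assumes H: "subgroup H G" and x: "x \<in> Fix H"
  shows "Lx x \<in> NS q (W\<lparr>carrier := PC H\<rparr>)"
proof -
  have xO: "x \<in> Om" using x Fix_def by auto
  have sub: "Lx x \<subseteq> PC H"
    unfolding Lx_def PC_def psi_def using pt_carrier[OF xO] subgroup.one_closed[OF H]
    by (auto simp: pt_def)
  interpret P: group "W\<lparr>carrier := PC H\<rparr>" using PW_group[OF H] .
  have "subgroup (Lx x) (W\<lparr>carrier := PC H\<rparr>)"
  proof (rule P.subgroupI)
    show "Lx x \<subseteq> carrier (W\<lparr>carrier := PC H\<rparr>)" using sub by simp
    show "Lx x \<noteq> {}" unfolding Lx_def using q_pos by auto
  next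
    fix a assume a: "a \<in> Lx x"
    then obtain u where u: "a = pt x u" "0 \<le> u" "u < int q" unfolding Lx_def by auto
    have "inv\<^bsub>W\<lparr>carrier := PC H\<rparr>\<^esub> a = inv\<^bsub>W\<^esub> a"
      using group.m_inv_consistent[OF W_group PC_sub[OF H], of a] a sub by blast
    also have "\<dots> = pt x ((- u) mod int q)"
    proof (rule group.inv_equality[OF W_group])
      show "pt x (- u mod int q) \<otimes>\<^bsub>W\<^esub> a = \<one>\<^bsub>W\<^esub>"
      proof -
        have "(- u mod int q + u) mod int q = 0" by (simp add: mod_add_left_eq)
        then show ?thesis unfolding u pt_mult by (simp add: pt_zero)
      qed
      show "a \<in> carrier W" using u pt_carrier[OF xO] by auto
      show "pt x (- u mod int q) \<in> carrier W" using pt_carrier[OF xO] q_pos by auto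
    qed
    finally show "inv\<^bsub>W\<lparr>carrier := PC H\<rparr>\<^esub> a \<in> Lx x"
      unfolding Lx_def using q_pos by auto
  next
    fix a b assume "a \<in> Lx x" "b \<in> Lx x"
    then show "a \<otimes>\<^bsub>W\<lparr>carrier := PC H\<rparr>\<^esub> b \<in> Lx x"
      unfolding Lx_def using q_pos by (auto simp: pt_mult)
  qed
  moreover have "\<forall>w\<in>carrier (W\<lparr>carrier := PC H\<rparr>). \<forall>l\<in>Lx x. \<exists>l'\<in>Lx x.
      w \<otimes>\<^bsub>W\<lparr>carrier := PC H\<rparr>\<^esub> l = l' \<otimes>\<^bsub>W\<lparr>carrier := PC H\<rparr>\<^esub> w"
  proof (intro ballI)
    fix w l assume w: "w \<in> carrier (W\<lparr>carrier := PC H\<rparr>)" and l: "l \<in> Lx x"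
    obtain f d g where we: "w = (f,d,g)" by (cases w) auto
    have g: "g \<in> H" "g \<in> carrier G" using w we PC_def psi_def W_carrier by auto
    then have ig: "inv g \<in> H" using subgroup.m_inv_closed[OF H] by auto
    have ax: "act (inv g) x = x" using x ig unfolding Fix_def by auto
    have ax2: "act g x = x" using x g unfolding Fix_def by auto
    have fix1: "act (inv g) z = x \<longleftrightarrow> z = x" for z
    proof
      assume "act (inv g) z = x"
      then have "act g (act (inv g) z) = act g x" by simp
      then show "z = x" using act_cancel1[OF g(2)] ax2 by simp
    next
      assume "z = x" then show "act (inv g) z = x" using ax by simp
    qed
    obtain u where u: "l = pt x u" "0 \<le> u" "u < int q" using l unfolding Lx_def by auto
    let ?l' = "pt x ((d x * u) mod int q)"
    have "?l' \<in> Lx x" unfolding Lx_def using q_pos by auto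
    moreover have "w \<otimes>\<^bsub>W\<^esub> l = ?l' \<otimes>\<^bsub>W\<^esub> w"
    proof -
      have e1: "(\<lambda>z. (f z + d z * (if act (inv g) z = x then u else 0)) mod int q) =
                (\<lambda>z. ((if z = x then d x * u mod int q else 0) + 1 * f (act (inv \<one>) z)) mod int q)"
      proof
        fix z show "(f z + d z * (if act (inv g) z = x then u else 0)) mod int q =
                ((if z = x then d x * u mod int q else 0) + 1 * f (act (inv \<one>) z)) mod int q"
          unfolding fix1 act_inv_one by (cases "z = x") (simp_all add: modh2 mod_add_right_eq add.commute)
      qed
      show ?thesis unfolding we u pt_def W_mult e1 using g(2) act_inv_one by simp
    qed
    ultimately show "\<exists>l'\<in>Lx x. w \<otimes>\<^bsub>W\<lparr>carrier := PC H\<rparr>\<^esub> l = l' \<otimes>\<^bsub>W\<lparr>carrier := PC H\<rparr>\<^esub> w"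
      by auto
  qed
  ultimately show ?thesis unfolding NS_def using card_Lx by auto
qed

end

context wr begin
lemma pow_d:
  assumes "(f,d,\<one>) \<in> carrier W"
  shows "\<exists>F. (f,d,\<one>) [^]\<^bsub>W\<^esub> (n::nat) = (F, \<lambda>z. d z ^ n, \<one>)"
proof (induction n)
  case 0
  show ?case by (simp add: W_one)
next
  case (Suc n)
  then obtain F where F: "(f,d,\<one>) [^]\<^bsub>W\<^esub> n = (F, \<lambda>z. d z ^ n, \<one>)" by blast
  have "(f,d,\<one>) [^]\<^bsub>W\<^esub> Suc n = (F, \<lambda>z. d z ^ n, \<one>) \<otimes>\<^bsub>W\<^esub> (f,d,\<one>)"
    by (simp add: F)
  also have "\<dots> = (\<lambda>z. (F z + d z ^ n * f z) mod int q, \<lambda>z. d z ^ Suc n, \<one>)"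
    by (simp add: W_mult act_one mult.commute)
  finally show ?case by blast
qed

lemma q_odd: "odd q" using q_prime q_big prime_odd_nat by auto

lemma q_gt2: "2 < q" using q_big by simp

lemma elem_form:
  assumes H: "subgroup H G" and L: "subgroup L (W\<lparr>carrier := PC H\<rparr>)" and cL: "card L = q"
    and l: "l \<in> L"
  shows "\<exists>f. l = (f, \<lambda>_. 1, \<one>) \<and> l \<in> carrier W"
proof -
  have LPC: "L \<subseteq> PC H" using subgroup.subset[OF L] by simp
  have lW: "l \<in> carrier W" using LPC l PC_def by auto
  have "group ((W\<lparr>carrier := PC H\<rparr>)\<lparr>carrier := L\<rparr>)"
    using group.subgroup_imp_group[OF PW_group[OF H] L] .
  then have gL: "group (W\<lparr>carrier := L\<rparr>)" by simp
  have "l [^]\<^bsub>W\<lparr>carrier := L\<rparr>\<^esub> order (W\<lparr>carrier := L\<rparr>) = \<one>\<^bsub>W\<lparr>carrier := L\<rparr>\<^esub>"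
    using group.pow_order_eq_1[OF gL, of l] l by simp
  then have pq: "l [^]\<^bsub>W\<^esub> q = \<one>\<^bsub>W\<^esub>"
    using monoid.nat_pow_consistent[OF group.is_monoid[OF W_group], of l q L] cL
    by (simp add: order_def)
  have "psi (l [^]\<^bsub>W\<^esub> q) = psi l [^] q"
    using hom_nat_pow[OF psi_hom lW W_group is_group] .
  then have "psi l [^] q = \<one>" using pq by (simp add: W_one psi_def)
  moreover have pl: "psi l \<in> carrier G" using lW by (cases l) (simp add: psi_def W_carrier)
  ultimately have "ord (psi l) dvd q" using pow_eq_id by auto
  then have "ord (psi l) = 1 \<or> ord (psi l) = q" using q_prime prime_nat_iff by auto
  moreover have "ord (psi l) dvd order G" using ord_dvd_group_order[OF pl] .
  moreover have "0 < order G" using finG order_gt_0_iff_finite by auto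
  ultimately have "ord (psi l) = 1"
  proof (elim disjE)
    assume "ord (psi l) = q" "ord (psi l) dvd order G" "0 < order G"
    then have "q \<le> order G" using dvd_imp_le by metis
    then show ?thesis using q_big unfolding order_def by simp
  qed
  then have p1: "psi l = \<one>" using ord_eq_1[OF pl] by simp
  obtain f d g where le: "l = (f,d,g)" by (cases l) auto
  have g1: "g = \<one>" using p1 le psi_def by simp
  have fd: "(f,d) \<in> FD" using lW le W_carrier by simp
  obtain F where "(f,d,\<one>) [^]\<^bsub>W\<^esub> q = (F, \<lambda>z. d z ^ q, \<one>)"
    using pow_d[of f d q] lW le g1 by blast
  then have "\<forall>z. d z ^ q = 1" using pq le g1 by (simp add: W_one fun_eq_iff)
  then have "\<forall>z. d z = 1"
  proof (intro allI)
    fix z assume a: "\<forall>z. d z ^ q = 1"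
    have "d z = 1 \<or> d z = -1" using FD_d[OF fd] by blast
    moreover have "(-1::int) ^ q = -1" using q_odd by (simp add: neg_one_odd_power)
    moreover have "d z ^ q = 1" using a by blast
    ultimately show "d z = 1" by (metis one_neq_neg_one)
  qed
  then have "d = (\<lambda>_. 1)" by auto
  then show ?thesis using le g1 lW by auto
qed


lemma NS_Lx:
  assumes H: "subgroup H G" and LN: "L \<in> NS q (W\<lparr>carrier := PC H\<rparr>)"
  shows "\<exists>x\<in>Fix H. L = Lx x"
proof -
  have L: "subgroup L (W\<lparr>carrier := PC H\<rparr>)" and cL: "card L = q"
    and nrm: "\<forall>w\<in>PC H. \<forall>l\<in>L. \<exists>l'\<in>L. w \<otimes>\<^bsub>W\<^esub> l = l' \<otimes>\<^bsub>W\<^esub> w"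
    using LN unfolding NS_def by auto
  have LPC: "L \<subseteq> PC H" using subgroup.subset[OF L] by simp
  have LW: "L \<subseteq> carrier W" using LPC PC_def by auto
  have form: "\<And>l. l \<in> L \<Longrightarrow> \<exists>f. l = (f, \<lambda>_. 1, \<one>) \<and> l \<in> carrier W"
    using elem_form[OF H L cL] by blast
  have one: "\<one>\<^bsub>W\<^esub> \<in> L" using subgroup.one_closed[OF L] by simp
  have mc: "\<And>a b. a \<in> L \<Longrightarrow> b \<in> L \<Longrightarrow> a \<otimes>\<^bsub>W\<^esub> b \<in> L"
    using subgroup.m_closed[OF L] by simp
  have finL: "finite L" using LW W_finite finite_subset by blast
  obtain e0 where e0: "e0 \<in> L" "e0 \<noteq> \<one>\<^bsub>W\<^esub>"
  proof -
    have "\<not> L \<subseteq> {\<one>\<^bsub>W\<^esub>}"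
    proof
      assume "L \<subseteq> {\<one>\<^bsub>W\<^esub>}"
      then have "card L \<le> 1" using card_mono[of "{\<one>\<^bsub>W\<^esub>}" L] by simp
      then show False using cL q_big by simp
    qed
    then show ?thesis using that by blast
  qed
  obtain f where e0f: "e0 = (f, \<lambda>_. 1, \<one>)" and e0W: "e0 \<in> carrier W" using form[OF e0(1)] by blast
  have fd: "(f, \<lambda>_. 1) \<in> FD" using e0W e0f W_carrier by simp
  obtain x0 where fx0: "f x0 \<noteq> 0"
  proof -
    have "f \<noteq> (\<lambda>_. 0)" using e0 e0f W_one by auto
    then show ?thesis using that by auto
  qed
  have x0: "x0 \<in> Om" using fd fx0 unfolding FD_def by auto
  have f0: "0 < f x0" "f x0 < int q" using FD_f[OF fd, of x0] fx0 by auto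
  define ds where "ds = (\<lambda>z. if z \<in> Om \<and> z \<noteq> x0 then -1 else (1::int))"
  have sPC: "(\<lambda>_. 0, ds, \<one>) \<in> PC H"
    using subgroup.one_closed[OF H] q_pos by (simp add: PC_def psi_def W_carrier FD_def ds_def)
  obtain l' where l': "l' \<in> L" "(\<lambda>_. 0, ds, \<one>) \<otimes>\<^bsub>W\<^esub> e0 = l' \<otimes>\<^bsub>W\<^esub> (\<lambda>_. 0, ds, \<one>)"
    using nrm sPC e0(1) by blast
  obtain f' where l'f: "l' = (f', \<lambda>_. 1, \<one>)" and l'W: "l' \<in> carrier W" using form[OF l'(1)] by blast
  have fd': "(f', \<lambda>_. 1) \<in> FD" using l'W l'f W_carrier by simp
  have f'eq: "f' z = (ds z * f z) mod int q" for z
  proof -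
    have "(\<lambda>z. (0 + ds z * f (act (inv \<one>) z)) mod int q) = (\<lambda>z. (f' z + 1 * 0) mod int q)"
      using l'(2) unfolding e0f l'f W_mult by simp
    then have "(ds z * f z) mod int q = f' z mod int q" unfolding act_inv_one by (metis add_0 add.right_neutral mult_zero_right)
    also have "\<dots> = f' z" using FD_f[OF fd', of z] by simp
    finally show ?thesis by simp
  qed
  define c where "c = (2 * f x0) mod int q"
  have e1: "e0 \<otimes>\<^bsub>W\<^esub> l' = pt x0 c"
  proof -
    have "(\<lambda>z. (f z + 1 * f' (act (inv \<one>) z)) mod int q) = (\<lambda>z. if z = x0 then c else 0)"
    proof
      fix z
      have "(f z + 1 * f' (act (inv \<one>) z)) mod int q = (f z + ds z * f z) mod int q"
        unfolding act_inv_one f'eq by (simp add: mod_add_right_eq)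
      also have "\<dots> = (if z = x0 then c else 0)"
      proof (cases "z = x0")
        case True then show ?thesis using x0 unfolding ds_def c_def by simp
      next
        case False
        show ?thesis
        proof (cases "z \<in> Om")
          case True then show ?thesis using False unfolding ds_def by simp
        next
          case nO: False
          then have "f z = 0" using fd unfolding FD_def by auto
          then show ?thesis using False by simp
        qed
      qed
      finally show "(f z + 1 * f' (act (inv \<one>) z)) mod int q = (if z = x0 then c else 0)" .
    qed
    then show ?thesis unfolding e0f l'f W_mult pt_def by simp
  qed
  have cL': "pt x0 c \<in> L" using mc[OF e0(1) l'(1)] e1 by simp
  have pq: "Factorial_Ring.prime (int q)" using q_prime by (simp add: prime_nat_int_transfer)
  have c_range: "0 < c" "c < int q"
  proof -
    have "c \<noteq> 0"
    proof
      assume "c = 0"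
      then have "int q dvd 2 * f x0" unfolding c_def by (simp add: dvd_eq_mod_eq_0)
      then have "int q dvd 2 \<or> int q dvd f x0" using pq prime_dvd_mult_iff by blast
      then show False
      proof
        assume "int q dvd 2" then have "int q \<le> 2" using zdvd_imp_le by force
        then show False using q_big by simp
      next
        assume "int q dvd f x0" then have "int q \<le> f x0" using zdvd_imp_le f0 by blast
        then show False using f0 by simp
      qed
    qed
    moreover have "0 \<le> c" "c < int q" unfolding c_def using q_pos by simp_all
    ultimately show "0 < c" "c < int q" by simp_all
  qed
  have pw: "pt x0 ((int k * c) mod int q) \<in> L" for k :: nat
  proof (induction k)
    case 0 then show ?case using one pt_zero by simp
  next
    case (Suc k)
    have "pt x0 ((int k * c) mod int q) \<otimes>\<^bsub>W\<^esub> pt x0 c \<in> L" using mc[OF Suc cL'] .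
    moreover have "((int k * c) mod int q + c) mod int q = (int (Suc k) * c) mod int q"
      by (metis modh2 add.commute distrib_left mult.commute mult.right_neutral of_nat_Suc)
    ultimately show ?case unfolding pt_mult by simp
  qed
  define F where "F = (\<lambda>k::nat. (int k * c) mod int q)"
  have injF: "inj_on F {0..<q}"
  proof
    fix k1 k2 assume k: "k1 \<in> {0..<q}" "k2 \<in> {0..<q}" and e: "F k1 = F k2"
    then have "int q dvd int k1 * c - int k2 * c" unfolding F_def using mod_eq_dvd_iff by blast
    then have "int q dvd (int k1 - int k2) * c" by (simp add: left_diff_distrib)
    then have "int q dvd (int k1 - int k2) \<or> int q dvd c" using pq prime_dvd_mult_iff by blast
    then show "k1 = k2"
    proof
      assume d: "int q dvd (int k1 - int k2)"
      show "k1 = k2"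
      proof (rule ccontr)
        assume "k1 \<noteq> k2"
        then have "int k1 - int k2 \<noteq> 0" by simp
        then have "\<bar>int q\<bar> \<le> \<bar>int k1 - int k2\<bar>" using dvd_imp_le_int d by blast
        then show False using k by auto
      qed
    next
      assume "int q dvd c" then have "int q \<le> c" using zdvd_imp_le c_range by blast
      then show "k1 = k2" using c_range by simp
    qed
  qed
  have imF: "F ` {0..<q} = {0..<int q}"
  proof (rule card_subset_eq)
    show "finite {0..<int q}" by simp
    show "F ` {0..<q} \<subseteq> {0..<int q}" unfolding F_def using q_pos by auto
    show "card (F ` {0..<q}) = card {0..<int q}" using card_image[OF injF] by simp
  qed
  have LxL: "Lx x0 \<subseteq> L"
  proof
    fix y assume "y \<in> Lx x0"
    then obtain a where a: "y = pt x0 a" "a \<in> {0..<int q}" unfolding Lx_def by auto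
    then obtain k where "a = F k" using imF by (metis imageE)
    then show "y \<in> L" using pw a unfolding F_def by simp
  qed
  have LeqLx: "Lx x0 = L" using card_subset_eq[OF finL LxL] card_Lx cL by simp
  have "x0 \<in> Fix H"
    unfolding Fix_def
  proof (intro CollectI conjI ballI x0)
    fix h assume h: "h \<in> H"
    have hG: "h \<in> carrier G" using h subgroup.mem_carrier[OF H] by blast
    have tPC: "(\<lambda>_. 0, \<lambda>_. 1, h) \<in> PC H"
      using h hG q_pos by (simp add: PC_def psi_def W_carrier FD_def)
    obtain l'' where l'': "l'' \<in> L" "(\<lambda>_. 0, \<lambda>_. 1, h) \<otimes>\<^bsub>W\<^esub> pt x0 c = l'' \<otimes>\<^bsub>W\<^esub> (\<lambda>_. 0, \<lambda>_. 1, h)"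
      using nrm tPC cL' by blast
    obtain b where b: "l'' = pt x0 b" using l''(1) LeqLx[symmetric] unfolding Lx_def by auto
    have "(\<lambda>z. (0 + 1 * (if act (inv h) z = x0 then c else 0)) mod int q)
        = (\<lambda>z. ((if z = x0 then b else 0) + 1 * 0) mod int q)"
      using l''(2) unfolding b pt_def W_mult by simp
    then have "(0 + 1 * (if act (inv h) (act h x0) = x0 then c else 0)) mod int q
        = ((if act h x0 = x0 then b else 0) + 1 * 0) mod int q" by (rule fun_cong)
    then have "c mod int q = (if act h x0 = x0 then b else 0) mod int q"
      unfolding act_cancel2[OF hG] by simp
    moreover have "c mod int q = c" using c_range by simp
    ultimately show "act h x0 = x0" using c_range by (cases "act h x0 = x0") auto
  qed
  then show ?thesis using LeqLx by blast
qed

lemma count_NS: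
  assumes H: "subgroup H G"
  shows "card (NS q (W\<lparr>carrier := PC H\<rparr>)) = card (Fix H)"
proof -
  have "NS q (W\<lparr>carrier := PC H\<rparr>) = Lx ` Fix H"
    using NS_Lx[OF H] Lx_in_NS[OF H] by blast
  moreover have "inj_on Lx (Fix H)"
  proof
    fix x y assume x: "x \<in> Fix H" and y: "y \<in> Fix H" and e: "Lx x = Lx y"
    have "pt x 1 \<in> Lx y" using e q_big unfolding Lx_def by auto
    then obtain a where "pt x 1 = pt y a" unfolding Lx_def by auto
    then show "x = y" using pt_inj[of x 1 y a] by simp
  qed
  ultimately show ?thesis by (simp add: card_image)
qed

end


lemma NS_iso_le:
  assumes P1: "group P1" and P2: "group P2" and h: "h \<in> iso P1 P2" and fin: "finite (carrier P2)"
  shows "card (NS q P1) \<le> card (NS q P2)"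
proof -
  have hh: "h \<in> hom P1 P2" using h unfolding iso_def by blast
  have ghh: "group_hom P1 P2 h" by (rule group_hom.intro[OF P1 P2 group_hom_axioms.intro[OF hh]])
  interpret gh: group_hom P1 P2 h by (rule ghh)
  have bij: "bij_betw h (carrier P1) (carrier P2)" using h unfolding iso_def by blast
  have inj: "inj_on h (carrier P1)" using bij_betw_imp_inj_on[OF bij] .
  have im: "h ` carrier P1 = carrier P2" using bij_betw_imp_surj_on[OF bij] .
  have maps: "(\<lambda>L. h ` L) ` NS q P1 \<subseteq> NS q P2"
  proof
    fix L2 assume "L2 \<in> (\<lambda>L. h ` L) ` NS q P1"
    then obtain L where L2: "L2 = h ` L" and L: "L \<in> NS q P1" by blast
    have sL: "subgroup L P1" and cL: "card L = q"
      and nL: "\<forall>x\<in>carrier P1. \<forall>l\<in>L. \<exists>l'\<in>L. x \<otimes>\<^bsub>P1\<^esub> l = l' \<otimes>\<^bsub>P1\<^esub> x"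
      using L unfolding NS_def by auto
    have Lsub: "L \<subseteq> carrier P1" using subgroup.subset[OF sL] .
    have "subgroup (h ` L) P2" using gh.subgroup_img_is_subgroup[OF sL] .
    moreover have "card (h ` L) = q" using card_image[OF inj_on_subset[OF inj Lsub]] cL by simp
    moreover have "\<forall>y\<in>carrier P2. \<forall>m\<in>h ` L. \<exists>m'\<in>h ` L. y \<otimes>\<^bsub>P2\<^esub> m = m' \<otimes>\<^bsub>P2\<^esub> y"
    proof (intro ballI)
      fix y m assume y: "y \<in> carrier P2" and m: "m \<in> h ` L"
      obtain x where x: "x \<in> carrier P1" "y = h x" using y im by blast
      obtain l where l: "l \<in> L" "m = h l" using m by blast
      obtain l' where l': "l' \<in> L" "x \<otimes>\<^bsub>P1\<^esub> l = l' \<otimes>\<^bsub>P1\<^esub> x" using nL x l by blast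
      have "y \<otimes>\<^bsub>P2\<^esub> m = h (x \<otimes>\<^bsub>P1\<^esub> l)" using x l Lsub by auto
      also have "\<dots> = h l' \<otimes>\<^bsub>P2\<^esub> y" using l' x Lsub by auto
      finally show "\<exists>m'\<in>h ` L. y \<otimes>\<^bsub>P2\<^esub> m = m' \<otimes>\<^bsub>P2\<^esub> y" using l' by blast
    qed
    ultimately show "L2 \<in> NS q P2" unfolding NS_def L2 by blast
  qed
  have injI: "inj_on (\<lambda>L. h ` L) (NS q P1)"
  proof
    fix A B assume A: "A \<in> NS q P1" and B: "B \<in> NS q P1" and e: "h ` A = h ` B"
    have "A \<subseteq> carrier P1" "B \<subseteq> carrier P1"
      using A B subgroup.subset unfolding NS_def by blast+
    then show "A = B" using e inj_on_image_eq_iff[OF inj] by blast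
  qed
  have "finite (NS q P2)"
  proof (rule finite_subset)
    show "NS q P2 \<subseteq> Pow (carrier P2)" unfolding NS_def using subgroup.subset by blast
    show "finite (Pow (carrier P2))" using fin by simp
  qed
  then show ?thesis using card_inj_on_le[OF injI maps] by blast
qed

lemma NS_iso_eq:
  assumes P1: "group P1" and P2: "group P2" and h: "h \<in> iso P1 P2"
    and fin1: "finite (carrier P1)" and fin2: "finite (carrier P2)"
  shows "card (NS q P1) = card (NS q P2)"
  by (rule le_antisym[OF NS_iso_le[OF P1 P2 h fin2] NS_iso_le[OF P2 P1 group.iso_set_sym[OF P1 h] fin1]])

lemma digits:
  fixes u v :: "nat \<Rightarrow> nat"
  assumes "\<forall>i<n. u i < B" "\<forall>i<n. v i < B" "(\<Sum>i<n. B^i * u i) = (\<Sum>i<n. B^i * v i)"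
  shows "\<forall>i<n. u i = v i"
  using assms
proof (induction n arbitrary: u v)
  case 0 then show ?case by simp
next
  case (Suc n)
  have eu: "(\<Sum>i<Suc n. B^i * u i) = u 0 + B * (\<Sum>i<n. B^i * u (Suc i))"
    by (simp only: sum.lessThan_Suc_shift) (simp add: sum_distrib_left mult.assoc)
  have ev: "(\<Sum>i<Suc n. B^i * v i) = v 0 + B * (\<Sum>i<n. B^i * v (Suc i))"
    by (simp only: sum.lessThan_Suc_shift) (simp add: sum_distrib_left mult.assoc)
  have u0: "u 0 < B" "v 0 < B" using Suc.prems by auto
  have E: "u 0 + B * (\<Sum>i<n. B^i * u (Suc i)) = v 0 + B * (\<Sum>i<n. B^i * v (Suc i))"
    using Suc.prems(3) eu ev by simp
  then have "(u 0 + B * (\<Sum>i<n. B^i * u (Suc i))) mod B = (v 0 + B * (\<Sum>i<n. B^i * v (Suc i))) mod B"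
    by simp
  then have e0: "u 0 = v 0" using u0 by simp
  have Bpos: "B > 0" using u0 by simp
  have "(\<Sum>i<n. B^i * u (Suc i)) = (\<Sum>i<n. B^i * v (Suc i))" using E e0 Bpos by simp
  moreover have "\<forall>i<n. u (Suc i) < B" using Suc.prems(1) by simp
  moreover have "\<forall>i<n. v (Suc i) < B" using Suc.prems(2) by simp
  ultimately have "\<forall>i<n. u (Suc i) = v (Suc i)"
    using Suc.IH[of "\<lambda>i. u (Suc i)" "\<lambda>i. v (Suc i)"] by blast
  then show ?case using e0 by (auto simp: less_Suc_eq_0_disj)
qed


lemma transport:
  fixes W :: "('w,'z) monoid_scheme" and G :: "('a,'b) monoid_scheme" and psi :: "'w \<Rightarrow> 'a"
  assumes W: "group W" and finW: "finite (carrier W)" and G: "group G"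
    and hom: "psi \<in> hom W G" and surj: "psi ` carrier W = carrier G"
  shows "\<exists>(Gt :: nat monoid) (\<phi> :: nat \<Rightarrow> 'a). group Gt \<and> finite (carrier Gt) \<and>
     \<phi> \<in> hom Gt G \<and> \<phi> ` carrier Gt = carrier G \<and>
     (\<forall>H. subgroup H G \<longrightarrow> card (NS q (Gt\<lparr>carrier := preimage_in Gt \<phi> H\<rparr>))
                              = card (NS q (W\<lparr>carrier := preimage_in W psi H\<rparr>)))"
proof -
  define A where "A = {0..<card (carrier W)}"
  obtain e where eA: "bij_betw e A (carrier W)" using ex_bij_betw_nat_finite[OF finW] A_def by blast
  define ei where "ei = inv_into A e"
  define Gt :: "nat monoid" where
    "Gt = \<lparr>carrier = A, monoid.mult = (\<lambda>a b. ei (e a \<otimes>\<^bsub>W\<^esub> e b)), one = ei \<one>\<^bsub>W\<^esub>\<rparr>"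
  have inj: "inj_on e A" using bij_betw_imp_inj_on[OF eA] .
  have im: "e ` A = carrier W" using bij_betw_imp_surj_on[OF eA] .
  have eei: "\<And>y. y \<in> carrier W \<Longrightarrow> e (ei y) = y" unfolding ei_def using im by (metis f_inv_into_f)
  have eiA: "\<And>y. y \<in> carrier W \<Longrightarrow> ei y \<in> A" unfolding ei_def using im by (metis inv_into_into)
  have eW: "\<And>a. a \<in> A \<Longrightarrow> e a \<in> carrier W" using im by blast
  have inje: "\<And>a b. a \<in> A \<Longrightarrow> b \<in> A \<Longrightarrow> e a = e b \<Longrightarrow> a = b" using inj inj_onD by metis
  have Gc: "carrier Gt = A" by (simp add: Gt_def)
  have Gm: "\<And>a b. a \<otimes>\<^bsub>Gt\<^esub> b = ei (e a \<otimes>\<^bsub>W\<^esub> e b)" by (simp add: Gt_def)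
  have Go: "\<one>\<^bsub>Gt\<^esub> = ei \<one>\<^bsub>W\<^esub>" by (simp add: Gt_def)
  have emult: "\<And>a b. a \<in> A \<Longrightarrow> b \<in> A \<Longrightarrow> e (a \<otimes>\<^bsub>Gt\<^esub> b) = e a \<otimes>\<^bsub>W\<^esub> e b"
    unfolding Gm using eei eW group.is_monoid[OF W] monoid.m_closed by metis
  have eone: "e \<one>\<^bsub>Gt\<^esub> = \<one>\<^bsub>W\<^esub>" unfolding Go using eei group.is_monoid[OF W] monoid.one_closed by metis
  have mclosed: "\<And>a b. a \<in> A \<Longrightarrow> b \<in> A \<Longrightarrow> a \<otimes>\<^bsub>Gt\<^esub> b \<in> A"
    unfolding Gm using eiA eW group.is_monoid[OF W] monoid.m_closed by metis
  have oneA: "\<one>\<^bsub>Gt\<^esub> \<in> A" unfolding Go using eiA group.is_monoid[OF W] monoid.one_closed by metis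
  have gGt: "group Gt"
  proof (rule groupI)
    fix x y assume "x \<in> carrier Gt" "y \<in> carrier Gt"
    then show "x \<otimes>\<^bsub>Gt\<^esub> y \<in> carrier Gt" using mclosed Gc by simp
  next
    show "\<one>\<^bsub>Gt\<^esub> \<in> carrier Gt" using oneA Gc by simp
  next
    fix x y z assume xyz: "x \<in> carrier Gt" "y \<in> carrier Gt" "z \<in> carrier Gt"
    then have xyzA: "x \<in> A" "y \<in> A" "z \<in> A" using Gc by auto
    have "e (x \<otimes>\<^bsub>Gt\<^esub> y \<otimes>\<^bsub>Gt\<^esub> z) = e x \<otimes>\<^bsub>W\<^esub> e y \<otimes>\<^bsub>W\<^esub> e z"
      using xyzA emult mclosed by simp
    also have "\<dots> = e x \<otimes>\<^bsub>W\<^esub> (e y \<otimes>\<^bsub>W\<^esub> e z)"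
      using xyzA eW group.is_monoid[OF W] monoid.m_assoc by metis
    also have "\<dots> = e (x \<otimes>\<^bsub>Gt\<^esub> (y \<otimes>\<^bsub>Gt\<^esub> z))"
      using xyzA emult mclosed by simp
    finally show "x \<otimes>\<^bsub>Gt\<^esub> y \<otimes>\<^bsub>Gt\<^esub> z = x \<otimes>\<^bsub>Gt\<^esub> (y \<otimes>\<^bsub>Gt\<^esub> z)"
      by (rule inje[OF mclosed[OF mclosed[OF xyzA(1,2)] xyzA(3)] mclosed[OF xyzA(1) mclosed[OF xyzA(2,3)]]])
  next
    fix x assume "x \<in> carrier Gt"
    then have xA: "x \<in> A" using Gc by simp
    have "e (\<one>\<^bsub>Gt\<^esub> \<otimes>\<^bsub>Gt\<^esub> x) = e x"
      using emult[OF oneA xA] eone eW[OF xA] group.is_monoid[OF W] monoid.l_one by metis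
    then show "\<one>\<^bsub>Gt\<^esub> \<otimes>\<^bsub>Gt\<^esub> x = x" by (rule inje[OF mclosed[OF oneA xA] xA])
    define y where "y = ei (inv\<^bsub>W\<^esub> (e x))"
    have ywc: "inv\<^bsub>W\<^esub> (e x) \<in> carrier W" using eW[OF xA] group.inv_closed[OF W] by blast
    have yA: "y \<in> A" unfolding y_def using eiA ywc by blast
    have "e (y \<otimes>\<^bsub>Gt\<^esub> x) = e \<one>\<^bsub>Gt\<^esub>"
      using emult[OF yA xA] eone eei[OF ywc] group.l_inv[OF W eW[OF xA]] unfolding y_def by simp
    then have "y \<otimes>\<^bsub>Gt\<^esub> x = \<one>\<^bsub>Gt\<^esub>" by (rule inje[OF mclosed[OF yA xA] oneA])
    then show "\<exists>y\<in>carrier Gt. y \<otimes>\<^bsub>Gt\<^esub> x = \<one>\<^bsub>Gt\<^esub>" using yA Gc by blast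
  qed
  define \<phi> where "\<phi> = (\<lambda>a. psi (e a))"
  have phom: "\<phi> \<in> hom Gt G"
  proof -
    have hc: "\<And>w. w \<in> carrier W \<Longrightarrow> psi w \<in> carrier G" using hom by (simp add: hom_def Pi_def)
    have "\<phi> \<in> carrier Gt \<rightarrow> carrier G" unfolding \<phi>_def Gc using eW hc by blast
    moreover have "\<forall>x\<in>carrier Gt. \<forall>y\<in>carrier Gt. \<phi> (x \<otimes>\<^bsub>Gt\<^esub> y) = \<phi> x \<otimes>\<^bsub>G\<^esub> \<phi> y"
      unfolding \<phi>_def Gc using emult eW hom_mult[OF hom] by simp
    ultimately show ?thesis unfolding hom_def by blast
  qed
  have psurj: "\<phi> ` carrier Gt = carrier G" unfolding \<phi>_def Gc using im surj by (simp add: image_image[symmetric])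
  have "card (NS q (Gt\<lparr>carrier := preimage_in Gt \<phi> H\<rparr>)) = card (NS q (W\<lparr>carrier := preimage_in W psi H\<rparr>))"
    if H: "subgroup H G" for H
  proof (rule NS_iso_eq)
    have s1: "subgroup (preimage_in Gt \<phi> H) Gt"
      unfolding preimage_in_def by (rule preimage_subgroup[OF gGt G phom H])
    have s2: "subgroup (preimage_in W psi H) W"
      unfolding preimage_in_def by (rule preimage_subgroup[OF W G hom H])
    show "group (Gt\<lparr>carrier := preimage_in Gt \<phi> H\<rparr>)" using group.subgroup_imp_group[OF gGt s1] .
    show "group (W\<lparr>carrier := preimage_in W psi H\<rparr>)" using group.subgroup_imp_group[OF W s2] .
    show "finite (carrier (Gt\<lparr>carrier := preimage_in Gt \<phi> H\<rparr>))"
      unfolding preimage_in_def Gc A_def by simp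
    show "finite (carrier (W\<lparr>carrier := preimage_in W psi H\<rparr>))"
      unfolding preimage_in_def using finW by simp
    have pre: "preimage_in Gt \<phi> H = {a \<in> A. psi (e a) \<in> H}" unfolding preimage_in_def Gc \<phi>_def by simp
    have preW: "preimage_in W psi H = {w \<in> carrier W. psi w \<in> H}" unfolding preimage_in_def by simp
    have bij2: "bij_betw e {a \<in> A. psi (e a) \<in> H} {w \<in> carrier W. psi w \<in> H}"
    proof (rule bij_betw_imageI)
      show "inj_on e {a \<in> A. psi (e a) \<in> H}" by (rule inj_on_subset[OF inj]) blast
      show "e ` {a \<in> A. psi (e a) \<in> H} = {w \<in> carrier W. psi w \<in> H}"
      proof
        show "e ` {a \<in> A. psi (e a) \<in> H} \<subseteq> {w \<in> carrier W. psi w \<in> H}" using eW by auto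
        show "{w \<in> carrier W. psi w \<in> H} \<subseteq> e ` {a \<in> A. psi (e a) \<in> H}"
        proof
          fix w assume w: "w \<in> {w \<in> carrier W. psi w \<in> H}"
          then have "ei w \<in> {a \<in> A. psi (e a) \<in> H}" using eiA eei by auto
          then show "w \<in> e ` {a \<in> A. psi (e a) \<in> H}" using eei w by force
        qed
      qed
    qed
    have "e \<in> hom (Gt\<lparr>carrier := preimage_in Gt \<phi> H\<rparr>) (W\<lparr>carrier := preimage_in W psi H\<rparr>)"
      unfolding hom_def pre preW using bij_betw_apply[OF bij2] emult by auto
    then show "e \<in> iso (Gt\<lparr>carrier := preimage_in Gt \<phi> H\<rparr>) (W\<lparr>carrier := preimage_in W psi H\<rparr>)"
      unfolding iso_def using bij2 pre preW by simp
  qed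
  moreover have "finite (carrier Gt)" unfolding Gc A_def by simp
  ultimately show ?thesis using gGt phom psurj by blast
qed



definition Cos :: "('a,'b) monoid_scheme \<Rightarrow> 'a set \<Rightarrow> 'a set set" where
  "Cos G M = (\<lambda>a. a <#\<^bsub>G\<^esub> M) ` carrier G"

definition U :: "('a,'b) monoid_scheme \<Rightarrow> 'a set \<Rightarrow> 'a set \<Rightarrow> 'a set set" where
  "U G M H = {C \<in> Cos G M. \<forall>h\<in>H. h <#\<^bsub>G\<^esub> C = C}"

context group begin

lemma conj_from_U:
  assumes H1: "subgroup H1 G" and H2: "subgroup H2 G" and ne: "U G H1 H2 \<noteq> {}"
  shows "\<exists>a\<in>carrier G. \<forall>h\<in>H2. inv a \<otimes> h \<otimes> a \<in> H1"
proof -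
  obtain C where C: "C \<in> U G H1 H2" using ne by blast
  then obtain a where a: "a \<in> carrier G" "C = a <# H1" and fixC: "\<forall>h\<in>H2. h <# C = C"
    unfolding U_def Cos_def by blast
  have "\<forall>h\<in>H2. inv a \<otimes> h \<otimes> a \<in> H1"
  proof
    fix h assume h: "h \<in> H2"
    have hG: "h \<in> carrier G" using h subgroup.mem_carrier[OF H2] by blast
    have "a \<in> C" unfolding a l_coset_def using subgroup.one_closed[OF H1] a(1) by force
    then have "h \<otimes> a \<in> h <# C" unfolding l_coset_def by blast
    then have "h \<otimes> a \<in> a <# H1" using fixC h a(2) by simp
    then obtain k where k: "k \<in> H1" "h \<otimes> a = a \<otimes> k" unfolding l_coset_def by blast
    have kG: "k \<in> carrier G" using k(1) subgroup.mem_carrier[OF H1] by blast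
    have "inv a \<otimes> h \<otimes> a = inv a \<otimes> (h \<otimes> a)" using a(1) hG by (simp add: m_assoc)
    also have "\<dots> = k" using k(2) a(1) kG by (simp add: m_assoc[symmetric])
    finally show "inv a \<otimes> h \<otimes> a \<in> H1" using k(1) by simp
  qed
  then show ?thesis using a(1) by blast
qed

lemma self_in_U:
  assumes H: "subgroup H G"
  shows "H \<in> U G H H"
proof -
  have Hs: "H \<subseteq> carrier G" using subgroup.subset[OF H] .
  have "H = \<one> <# H" using lcos_mult_one[OF Hs] by simp
  then have "H \<in> Cos G H" unfolding Cos_def by blast
  moreover have "\<forall>h\<in>H. h <# H = H"
  proof
    fix h assume h: "h \<in> H"
    have hG: "h \<in> carrier G" using h Hs by blast
    show "h <# H = H"
    proof
      show "h <# H \<subseteq> H" unfolding l_coset_def using h subgroup.m_closed[OF H] by blast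
      show "H \<subseteq> h <# H"
      proof
        fix y assume y: "y \<in> H"
        have yG: "y \<in> carrier G" using y Hs by blast
        have "inv h \<otimes> y \<in> H" using subgroup.m_closed[OF H subgroup.m_inv_closed[OF H h] y] .
        moreover have "y = h \<otimes> (inv h \<otimes> y)" using hG yG by (simp add: m_assoc[symmetric])
        ultimately show "y \<in> h <# H" unfolding l_coset_def by blast
      qed
    qed
  qed
  ultimately show ?thesis unfolding U_def by blast
qed

lemma conj_of_both:
  assumes fin: "finite (carrier G)" and H1: "subgroup H1 G" and H2: "subgroup H2 G"
    and a: "a \<in> carrier G" "\<forall>h\<in>H2. inv a \<otimes> h \<otimes> a \<in> H1"
    and b: "b \<in> carrier G" "\<forall>h\<in>H1. inv b \<otimes> h \<otimes> b \<in> H2"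
  shows "conjugate_in G H1 H2"
proof -
  have H1s: "H1 \<subseteq> carrier G" and H2s: "H2 \<subseteq> carrier G"
    using subgroup.subset[OF H1] subgroup.subset[OF H2] by auto
  have f1: "finite H1" and f2: "finite H2" using H1s H2s fin finite_subset by auto
  have injc: "inj_on (\<lambda>h. inv x \<otimes> h \<otimes> x) (carrier G)" if x: "x \<in> carrier G" for x
  proof
    fix u v assume u: "u \<in> carrier G" and v: "v \<in> carrier G" and e: "inv x \<otimes> u \<otimes> x = inv x \<otimes> v \<otimes> x"
    then have "inv x \<otimes> u = inv x \<otimes> v" using x u v by simp
    then have "x \<otimes> (inv x \<otimes> u) = x \<otimes> (inv x \<otimes> v)" by simp
    then show "u = v" using u v x by (simp add: m_assoc[symmetric])
  qed
  let ?c = "\<lambda>h. inv a \<otimes> h \<otimes> a"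
  have c1: "?c ` H2 \<subseteq> H1" using a(2) by blast
  have "card H2 \<le> card H1"
    using card_inj_on_le[OF inj_on_subset[OF injc[OF a(1)] H2s] c1 f1] .
  moreover have "card H1 \<le> card H2"
    using card_inj_on_le[OF inj_on_subset[OF injc[OF b(1)] H1s] _ f2] b(2) by blast
  ultimately have "card (?c ` H2) = card H1"
    using card_image[OF inj_on_subset[OF injc[OF a(1)] H2s]] by simp
  then have cim: "?c ` H2 = H1" using card_subset_eq[OF f1 c1] by blast
  have bk: "a \<otimes> (inv a \<otimes> h \<otimes> a) \<otimes> inv a = h" if "h \<in> carrier G" for h
  proof -
    have "a \<otimes> (inv a \<otimes> h \<otimes> a) \<otimes> inv a = a \<otimes> (inv a \<otimes> h)" using that a(1) by (simp add: m_assoc)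
    also have "\<dots> = (a \<otimes> inv a) \<otimes> h" using that a(1) by (simp add: m_assoc[symmetric])
    also have "\<dots> = h" using that a(1) by simp
    finally show ?thesis .
  qed
  have "H2 = (\<lambda>k. a \<otimes> k \<otimes> inv a) ` H1"
  proof
    show "H2 \<subseteq> (\<lambda>k. a \<otimes> k \<otimes> inv a) ` H1"
    proof
      fix h assume h: "h \<in> H2"
      then have "?c h \<in> H1" using a(2) by blast
      moreover have "h = a \<otimes> ?c h \<otimes> inv a" using bk h H2s by auto
      ultimately show "h \<in> (\<lambda>k. a \<otimes> k \<otimes> inv a) ` H1" by blast
    qed
    show "(\<lambda>k. a \<otimes> k \<otimes> inv a) ` H1 \<subseteq> H2"
    proof
      fix y assume "y \<in> (\<lambda>k. a \<otimes> k \<otimes> inv a) ` H1"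
      then obtain k where k: "k \<in> H1" "y = a \<otimes> k \<otimes> inv a" by blast
      then obtain h where h: "h \<in> H2" "k = ?c h" using cim by blast
      then show "y \<in> H2" using k bk H2s by auto
    qed
  qed
  then show ?thesis unfolding conjugate_in_def using a(1) by blast
qed

end



theorem theorem1p1:
  fixes G :: "('a, 'b) monoid_scheme"
  assumes "group G" and "finite (carrier G)"
  shows "\<exists>(Gt :: nat monoid) (\<phi> :: nat \<Rightarrow> 'a).
           group Gt \<and> finite (carrier Gt) \<and> \<phi> \<in> hom Gt G \<and> \<phi> ` carrier Gt = carrier G \<and>
           (\<forall>G1 G2. subgroup G1 G \<and> subgroup G2 G \<and> \<not> conjugate_in G G1 G2 \<longrightarrow>
              \<not> (Gt\<lparr>carrier := preimage_in Gt \<phi> G1\<rparr> \<cong> Gt\<lparr>carrier := preimage_in Gt \<phi> G2\<rparr>))"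
proof -
  have gG: "group G" and fG: "finite (carrier G)" using assms by auto
  interpret G: group G by (rule gG)
  obtain q where qp: "Factorial_Ring.prime q" and qb: "card (carrier G) + 2 < q"
    using bigger_prime by blast
  define S where "S = {M. subgroup M G}"
  have finS: "finite S"
  proof (rule finite_subset)
    show "S \<subseteq> Pow (carrier G)" unfolding S_def using subgroup.subset by blast
    show "finite (Pow (carrier G))" using fG by simp
  qed
  obtain idx where idx: "bij_betw idx S {0..<card S}" using ex_bij_betw_finite_nat[OF finS] by blast
  define B :: nat where "B = 2 ^ card (carrier G) + 1"
  define cM where "cM = (\<lambda>M. B ^ idx M)"
  define Om where "Om = Sigma S (\<lambda>M. {..<cM M} \<times> Cos G M)"
  define act where "act = (\<lambda>g z. if z \<in> Om then (fst z, fst (snd z), g <#\<^bsub>G\<^esub> snd (snd z)) else z)"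
  have Ssub: "\<And>M. M \<in> S \<Longrightarrow> M \<subseteq> carrier G" unfolding S_def using subgroup.subset by blast
  have coset_closed: "\<And>g C M. g \<in> carrier G \<Longrightarrow> M \<in> S \<Longrightarrow> C \<in> Cos G M \<Longrightarrow> g <#\<^bsub>G\<^esub> C \<in> Cos G M"
  proof -
    fix g C M assume g: "g \<in> carrier G" and M: "M \<in> S" and C: "C \<in> Cos G M"
    then obtain a where a: "a \<in> carrier G" "C = a <#\<^bsub>G\<^esub> M" unfolding Cos_def by blast
    have "g <#\<^bsub>G\<^esub> C = (g \<otimes>\<^bsub>G\<^esub> a) <#\<^bsub>G\<^esub> M" using G.lcos_m_assoc[OF Ssub[OF M] g a(1)] a(2) by simp
    then show "g <#\<^bsub>G\<^esub> C \<in> Cos G M" unfolding Cos_def using g a(1) by blast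
  qed
  have coset_mult: "\<And>g h C M. g \<in> carrier G \<Longrightarrow> h \<in> carrier G \<Longrightarrow> M \<in> S \<Longrightarrow> C \<in> Cos G M \<Longrightarrow>
      (g \<otimes>\<^bsub>G\<^esub> h) <#\<^bsub>G\<^esub> C = g <#\<^bsub>G\<^esub> (h <#\<^bsub>G\<^esub> C)"
  proof -
    fix g h C M assume g: "g \<in> carrier G" and h: "h \<in> carrier G" and M: "M \<in> S" and C: "C \<in> Cos G M"
    then obtain a where a: "a \<in> carrier G" "C = a <#\<^bsub>G\<^esub> M" unfolding Cos_def by blast
    have "(g \<otimes>\<^bsub>G\<^esub> h) <#\<^bsub>G\<^esub> C = (g \<otimes>\<^bsub>G\<^esub> h \<otimes>\<^bsub>G\<^esub> a) <#\<^bsub>G\<^esub> M"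
      using G.lcos_m_assoc[OF Ssub[OF M] _ a(1), of "g \<otimes>\<^bsub>G\<^esub> h"] g h a(2) by simp
    moreover have "g <#\<^bsub>G\<^esub> (h <#\<^bsub>G\<^esub> C) = (g \<otimes>\<^bsub>G\<^esub> (h \<otimes>\<^bsub>G\<^esub> a)) <#\<^bsub>G\<^esub> M"
      using G.lcos_m_assoc[OF Ssub[OF M] h a(1)] G.lcos_m_assoc[OF Ssub[OF M] g, of "h \<otimes>\<^bsub>G\<^esub> a"] g h a by simp
    ultimately show "(g \<otimes>\<^bsub>G\<^esub> h) <#\<^bsub>G\<^esub> C = g <#\<^bsub>G\<^esub> (h <#\<^bsub>G\<^esub> C)"
      using g h a(1) by (simp add: G.m_assoc)
  qed
  have coset_one: "\<And>C M. M \<in> S \<Longrightarrow> C \<in> Cos G M \<Longrightarrow> \<one>\<^bsub>G\<^esub> <#\<^bsub>G\<^esub> C = C"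
  proof -
    fix C M assume M: "M \<in> S" and C: "C \<in> Cos G M"
    then obtain a where a: "a \<in> carrier G" "C = a <#\<^bsub>G\<^esub> M" unfolding Cos_def by blast
    show "\<one>\<^bsub>G\<^esub> <#\<^bsub>G\<^esub> C = C" using G.lcos_mult_one G.l_coset_subset_G[OF Ssub[OF M] a(1)] a(2) by simp
  qed
  have finCos: "\<And>M. finite (Cos G M)" unfolding Cos_def using fG by simp
  have wr: "wr G Om act q"
  proof (rule wr.intro[OF gG], rule wr_axioms.intro)
    show "finite Om" unfolding Om_def using finS finCos by (intro finite_SigmaI) auto
  next
    fix g z assume g: "g \<in> carrier G" and z: "z \<in> Om"
    then show "act g z \<in> Om" unfolding act_def Om_def using coset_closed by auto
  next
    fix g z assume "g \<in> carrier G" "z \<notin> Om"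
    then show "act g z = z" unfolding act_def by simp
  next
    fix z show "act \<one>\<^bsub>G\<^esub> z = z"
      unfolding act_def Om_def using coset_one by (cases z) auto
  next
    fix g h z assume g: "g \<in> carrier G" and h: "h \<in> carrier G"
    show "act (g \<otimes>\<^bsub>G\<^esub> h) z = act g (act h z)"
    proof (cases "z \<in> Om")
      case True
      obtain M i C where z: "z = (M, i, C)" by (cases z) auto
      have zz: "M \<in> S" "i < cM M" "C \<in> Cos G M" using True z Om_def by auto
      have "act h z \<in> Om" unfolding act_def Om_def z using zz coset_closed h by auto
      then show ?thesis unfolding z using True z coset_mult[OF g h zz(1,3)] by (simp add: act_def)
    next
      case False
      then show ?thesis unfolding act_def by simp
    qed
  next
    show "Factorial_Ring.prime q" by (rule qp)
    show "card (carrier G) + 2 < q" by (rule qb)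
    show "finite (carrier G)" by (rule fG)
  qed
  have Ubound: "\<And>M H. M \<in> S \<Longrightarrow> card (U G M H) < B"
  proof -
    fix M H assume M: "M \<in> S"
    have "U G M H \<subseteq> Pow (carrier G)"
    proof
      fix C assume "C \<in> U G M H"
      then obtain a where "a \<in> carrier G" "C = a <#\<^bsub>G\<^esub> M" unfolding U_def Cos_def by blast
      then show "C \<in> Pow (carrier G)" using G.l_coset_subset_G[OF Ssub[OF M]] by blast
    qed
    then have "card (U G M H) \<le> card (Pow (carrier G))" by (rule card_mono[rotated]) (simp add: fG)
    then show "card (U G M H) < B" unfolding B_def using card_Pow[of "carrier G"] fG by simp
  qed
  have Fdef: "wr.Fix Om act H = {z \<in> Om. \<forall>h\<in>H. act h z = z}" for H
    using wr.Fix_def[OF wr] by simp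
  have Fix_eq: "wr.Fix Om act H = Sigma S (\<lambda>M. {..<cM M} \<times> U G M H)" for H
  proof -
    have "z \<in> wr.Fix Om act H \<longleftrightarrow> z \<in> Sigma S (\<lambda>M. {..<cM M} \<times> U G M H)" for z
    proof -
      obtain M i C where z: "z = (M, i, C)" by (cases z) auto
      have "z \<in> wr.Fix Om act H \<longleftrightarrow> z \<in> Om \<and> (\<forall>h\<in>H. act h z = z)" unfolding Fdef by simp
      also have "\<dots> \<longleftrightarrow> z \<in> Sigma S (\<lambda>M. {..<cM M} \<times> U G M H)"
        unfolding z act_def U_def by (auto simp: Om_def)
      finally show ?thesis .
    qed
    then show ?thesis by blast
  qed
  have card_Fix: "card (wr.Fix Om act H) = (\<Sum>M\<in>S. B ^ idx M * card (U G M H))" for H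
  proof -
    have "card (wr.Fix Om act H) = (\<Sum>M\<in>S. card ({..<cM M} \<times> U G M H))"
      unfolding Fix_eq using finS finCos by (intro card_SigmaI) (auto simp: U_def intro: finite_subset)
    also have "\<dots> = (\<Sum>M\<in>S. B ^ idx M * card (U G M H))" unfolding cM_def by (simp add: card_cartesian_product)
    finally show ?thesis .
  qed
  have reidx: "(\<Sum>M\<in>S. B ^ idx M * u M) = (\<Sum>i<card S. B ^ i * u (inv_into S idx i))" for u :: "'a set \<Rightarrow> nat"
  proof -
    have "(\<Sum>i<card S. B ^ i * u (inv_into S idx i)) = (\<Sum>M\<in>S. B ^ idx M * u (inv_into S idx (idx M)))"
      using sum.reindex_bij_betw[OF idx, of "\<lambda>i. B ^ i * u (inv_into S idx i)"]
      by (simp add: lessThan_atLeast0)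
    also have "\<dots> = (\<Sum>M\<in>S. B ^ idx M * u M)"
      using bij_betw_imp_inj_on[OF idx] by (intro sum.cong) (auto simp: inv_into_f_f)
    finally show ?thesis by simp
  qed
  have key: "conjugate_in G G1 G2"
    if G1: "subgroup G1 G" and G2: "subgroup G2 G" and eq: "card (wr.Fix Om act G1) = card (wr.Fix Om act G2)"
    for G1 G2
  proof -
    let ?u1 = "\<lambda>i. card (U G (inv_into S idx i) G1)"
    let ?u2 = "\<lambda>i. card (U G (inv_into S idx i) G2)"
    have invS: "\<forall>i<card S. inv_into S idx i \<in> S"
      using bij_betw_imp_surj_on[OF idx] by (auto intro: inv_into_into)
    have s_eq: "(\<Sum>i<card S. B ^ i * ?u1 i) = (\<Sum>i<card S. B ^ i * ?u2 i)"
      using eq card_Fix reidx by simp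
    have b1: "\<forall>i<card S. ?u1 i < B" using invS Ubound by auto
    have b2: "\<forall>i<card S. ?u2 i < B" using invS Ubound by auto
    have "\<forall>i<card S. ?u1 i = ?u2 i" using digits[OF b1 b2 s_eq] .
    then have ueq: "\<And>M. M \<in> S \<Longrightarrow> card (U G M G1) = card (U G M G2)"
      using bij_betw_imp_inj_on[OF idx] bij_betw_apply[OF idx] by (metis atLeastLessThan_iff inv_into_f_f)
    have G1S: "G1 \<in> S" and G2S: "G2 \<in> S" using G1 G2 S_def by auto
    have finU: "\<And>M H. finite (U G M H)" unfolding U_def using finCos by auto
    have "U G G1 G2 \<noteq> {}"
    proof
      assume "U G G1 G2 = {}"
      then have "card (U G G1 G1) = 0" using ueq[OF G1S] by simp
      then show False using G.self_in_U[OF G1] finU by (metis card_0_eq empty_iff)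
    qed
    then obtain a where a: "a \<in> carrier G" "\<forall>h\<in>G2. inv\<^bsub>G\<^esub> a \<otimes>\<^bsub>G\<^esub> h \<otimes>\<^bsub>G\<^esub> a \<in> G1"
      using G.conj_from_U[OF G1 G2] by blast
    have "U G G2 G1 \<noteq> {}"
    proof
      assume "U G G2 G1 = {}"
      then have "card (U G G2 G2) = 0" using ueq[OF G2S] by simp
      then show False using G.self_in_U[OF G2] finU by (metis card_0_eq empty_iff)
    qed
    then obtain b where b: "b \<in> carrier G" "\<forall>h\<in>G1. inv\<^bsub>G\<^esub> b \<otimes>\<^bsub>G\<^esub> h \<otimes>\<^bsub>G\<^esub> b \<in> G2"
      using G.conj_from_U[OF G2 G1] by blast
    show ?thesis using G.conj_of_both[OF fG G1 G2 a b] .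
  qed
  obtain Gt :: "nat monoid" and \<phi> :: "nat \<Rightarrow> 'a" where
    T: "group Gt" "finite (carrier Gt)" "\<phi> \<in> hom Gt G" "\<phi> ` carrier Gt = carrier G"
    and TNS: "\<forall>H. subgroup H G \<longrightarrow> card (NS q (Gt\<lparr>carrier := preimage_in Gt \<phi> H\<rparr>))
        = card (NS q ((wr.W G Om act q)\<lparr>carrier := preimage_in (wr.W G Om act q) wr.psi H\<rparr>))"
    using transport[OF wr.W_group[OF wr] wr.W_finite[OF wr] gG wr.psi_hom[OF wr] wr.psi_surj[OF wr], of q]
    by blast
  have cnt: "card (NS q (Gt\<lparr>carrier := preimage_in Gt \<phi> H\<rparr>)) = card (wr.Fix Om act H)"
    if H: "subgroup H G" for H
  proof -
    have "preimage_in (wr.W G Om act q) wr.psi H = wr.PC G Om act q H"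
      unfolding preimage_in_def wr.PC_def[OF wr] by simp
    then show ?thesis using TNS H wr.count_NS[OF wr H] by simp
  qed
  have "\<forall>G1 G2. subgroup G1 G \<and> subgroup G2 G \<and> \<not> conjugate_in G G1 G2 \<longrightarrow>
              \<not> (Gt\<lparr>carrier := preimage_in Gt \<phi> G1\<rparr> \<cong> Gt\<lparr>carrier := preimage_in Gt \<phi> G2\<rparr>)"
  proof (intro allI impI notI)
    fix G1 G2
    assume A: "subgroup G1 G \<and> subgroup G2 G \<and> \<not> conjugate_in G G1 G2"
      and I: "Gt\<lparr>carrier := preimage_in Gt \<phi> G1\<rparr> \<cong> Gt\<lparr>carrier := preimage_in Gt \<phi> G2\<rparr>"
    have G1: "subgroup G1 G" and G2: "subgroup G2 G" and nc: "\<not> conjugate_in G G1 G2" using A by auto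
    obtain h where h: "h \<in> iso (Gt\<lparr>carrier := preimage_in Gt \<phi> G1\<rparr>) (Gt\<lparr>carrier := preimage_in Gt \<phi> G2\<rparr>)"
      using I unfolding is_iso_def by blast
    have grp: "group (Gt\<lparr>carrier := preimage_in Gt \<phi> H\<rparr>)" if "subgroup H G" for H
    proof -
      have "subgroup (preimage_in Gt \<phi> H) Gt"
        unfolding preimage_in_def by (rule preimage_subgroup[OF T(1) gG T(3) that])
      then show ?thesis using group.subgroup_imp_group[OF T(1)] by blast
    qed
    have fin: "finite (carrier (Gt\<lparr>carrier := preimage_in Gt \<phi> H\<rparr>))" for H
      using T(2) unfolding preimage_in_def by simp
    have "card (NS q (Gt\<lparr>carrier := preimage_in Gt \<phi> G1\<rparr>)) = card (NS q (Gt\<lparr>carrier := preimage_in Gt \<phi> G2\<rparr>))"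
      using NS_iso_eq[OF grp[OF G1] grp[OF G2] h fin fin] .
    then have "card (wr.Fix Om act G1) = card (wr.Fix Om act G2)" using cnt G1 G2 by simp
    then have "conjugate_in G G1 G2" using key G1 G2 by blast
    then show False using nc by simp
  qed
  then show ?thesis using T by blast
qed


end
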